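(* Let $G$ be a finite group, let $H$ be a subgroup of $G$ with $[G:H]=r$, and let $D$ be a $(v,k,\lambda)$-difference set in $G$ with order $n=k-\lambda$. Suppose that some coset of $H$ contains exactly $s$ elements of $D$. Then \[ \left| s - \frac{k}{r} \right| \leq \sqrt{n}\,\frac{r-1}{r}. \]
   Context: For a finite group $G$ of order $v$ and a $k$-subset $D\subseteq G$ with $k\ge 1$, identify $D$ with the group ring element $\sum_{d\in D} d\in\mathbb{Z}G$, and for $a=\sum a_i g_i\in\mathbb{Z}G$ put $a^{(-1)}=\sum a_i g_i^{-1}$. $D$ is a $(v,k,\lambda)$-difference set in $G$ if $DD^{(-1)}=\lambda G+n\cdot 1$ in $\mathbb{Z}G$, where $n=k-\lambda$ (the order of $D$); equivalently every non-identity element of $G$ can be written as $d_1d_2^{-1}$ with $d_1,d_2\in D$ in exactly $\lambda$ ways. *)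

theory Defs
  imports Complex_Main "HOL-Algebra.Algebra"
begin

definition difference_set :: "('a, 'b) monoid_scheme \<Rightarrow> 'a set \<Rightarrow> nat \<Rightarrow> nat \<Rightarrow> nat \<Rightarrow> bool" where
  "difference_set G D v k lam \<longleftrightarrow>
     D \<subseteq> carrier G \<and> finite (carrier G) \<and> v = order G \<and> card D = k \<and> k \<ge> 1 \<and>
     (\<forall>g \<in> carrier G. g \<noteq> \<one>\<^bsub>G\<^esub> \<longrightarrow>
        card {(d1, d2). d1 \<in> D \<and> d2 \<in> D \<and> d1 \<otimes>\<^bsub>G\<^esub> inv\<^bsub>G\<^esub> d2 = g} = lam)"

end

theory Submission
  imports Defs
begin


lemma count_pairs:
  fixes G (structure)
  assumes grp: "group G" and ds: "difference_set G D v k lam" and S: "S \<subseteq> carrier G"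
  shows "card {p \<in> D \<times> D. fst p \<otimes>\<^bsub>G\<^esub> inv\<^bsub>G\<^esub> snd p \<in> S}
         = (if \<one>\<^bsub>G\<^esub> \<in> S then k else 0) + lam * card (S - {\<one>\<^bsub>G\<^esub>})"
proof -
  interpret group G by fact
  have DG: "D \<subseteq> carrier G" and fin: "finite (carrier G)" and cD: "card D = k"
    and lamd: "\<And>g. g \<in> carrier G \<Longrightarrow> g \<noteq> \<one> \<Longrightarrow>
        card {(d1, d2). d1 \<in> D \<and> d2 \<in> D \<and> d1 \<otimes> inv d2 = g} = lam"
    using ds unfolding difference_set_def by auto
  have fD: "finite D" using DG fin finite_subset by blast
  have fS: "finite S" using S fin finite_subset by blast
  define f where "f = (\<lambda>p. fst p \<otimes> inv snd p)"
  define P where "P = {p \<in> D \<times> D. f p \<in> S}"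
  have fP: "finite P" unfolding P_def using fD by auto
  have "card P = (\<Sum>y\<in>S. card {p \<in> P. f p = y})"
    using sum.group[OF fP fS, of f "\<lambda>_. 1::nat"] by (auto simp: P_def image_subset_iff)
  also have "\<dots> = (\<Sum>y\<in>S. if y = \<one> then k else lam)"
  proof (rule sum.cong[OF refl])
    fix y assume y: "y \<in> S"
    show "card {p \<in> P. f p = y} = (if y = \<one> then k else lam)"
    proof (cases "y = \<one>")
      case True
      have "{p \<in> P. f p = y} = (\<lambda>d. (d, d)) ` D"
      proof -
        have eq: "\<And>a b. a \<in> carrier G \<Longrightarrow> b \<in> carrier G \<Longrightarrow> (a \<otimes> inv b = \<one>) = (a = b)"
          by (metis inv_closed inv_equality inv_inv r_inv)
        show ?thesis using eq DG True y unfolding P_def f_def by (auto simp: subset_iff)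
      qed
      moreover have "card ((\<lambda>d. (d, d)) ` D) = k" using cD by (simp add: card_image inj_on_def)
      ultimately show ?thesis using True by simp
    next
      case False
      have "{p \<in> P. f p = y} = {(d1, d2). d1 \<in> D \<and> d2 \<in> D \<and> d1 \<otimes> inv d2 = y}"
        using y unfolding P_def f_def by auto
      then show ?thesis using lamd[of y] False y S by auto
    qed
  qed
  also have "\<dots> = (if \<one> \<in> S then k else 0) + lam * card (S - {\<one>})"
  proof (cases "\<one> \<in> S")
    case True
    then have "(\<Sum>y\<in>S. if y = \<one> then k else lam) = k + (\<Sum>y\<in>S - {\<one>}. if y = \<one> then k else lam)"
      by (simp add: sum.remove[OF fS True])
    then show ?thesis using True by simp
  next
    case False
    then have "(\<Sum>y\<in>S. if y = \<one> then k else lam) = (\<Sum>y\<in>S. lam)"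
      by (intro sum.cong) auto
    then show ?thesis using False by simp
  qed
  finally show ?thesis unfolding P_def f_def .
qed



lemma var_bound:
  fixes y :: "'c \<Rightarrow> real"
  assumes fR: "finite R" and C0: "C0 \<in> R" and r2: "card R \<ge> 2" and s0: "(\<Sum>C\<in>R. y C) = 0"
  shows "(y C0)^2 * real (card R) \<le> (real (card R) - 1) * (\<Sum>C\<in>R. (y C)^2)"
proof -
  define T where "T = R - {C0}"
  define m where "m = real (card R) - 1"
  have fT: "finite T" using fR T_def by auto
  have cT: "real (card T) = m" using C0 fR r2 unfolding T_def m_def by (simp add: card_Diff_singleton of_nat_diff)
  have m1: "m \<ge> 1" using r2 unfolding m_def by simp
  have sT: "(\<Sum>C\<in>T. y C) = - y C0" using s0 sum.remove[OF fR C0, of y] T_def by simp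
  have qT: "(\<Sum>C\<in>T. (y C)^2) = (\<Sum>C\<in>R. (y C)^2) - (y C0)^2"
    using sum.remove[OF fR C0, of "\<lambda>C. (y C)^2"] T_def by simp
  have "0 \<le> (\<Sum>C\<in>T. (y C + y C0 / m)^2)" by (simp add: sum_nonneg)
  also have "\<dots> = (\<Sum>C\<in>T. (y C)^2) + 2 * (y C0 / m) * (\<Sum>C\<in>T. y C) + real (card T) * (y C0 / m)^2"
    by (simp add: power2_eq_square algebra_simps sum.distrib sum_distrib_left sum_divide_distrib[symmetric] sum_distrib_right[symmetric])
  also have "\<dots> = (\<Sum>C\<in>R. (y C)^2) - (y C0)^2 - (y C0)^2 / m"
    unfolding qT sT cT using m1 by (simp add: power2_eq_square field_simps)
  finally have "(y C0)^2 + (y C0)^2 / m \<le> (\<Sum>C\<in>R. (y C)^2)" by simp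
  then have "m * ((y C0)^2 + (y C0)^2 / m) \<le> m * (\<Sum>C\<in>R. (y C)^2)"
    using m1 by (intro mult_left_mono) auto
  moreover have "m * ((y C0)^2 + (y C0)^2 / m) = (y C0)^2 * real (card R)"
    using m1 unfolding m_def by (simp add: field_simps)
  ultimately show ?thesis unfolding m_def by simp
qed



lemma main_rcos:
  fixes G (structure)
  assumes grp: "group G" and fin: "finite (carrier G)" and sg: "subgroup H G"
    and ds: "difference_set G D v k lam" and C0: "C0 \<in> rcosets H"
  shows "\<bar>real (card (C0 \<inter> D)) - real k / real (card (rcosets H))\<bar>
         \<le> sqrt (real k - real lam) * (real (card (rcosets H)) - 1) / real (card (rcosets H))"
proof -
  interpret group G by fact
  define R where "R = rcosets H"
  define r where "r = card R"
  define x where "x = (\<lambda>C. real (card (C \<inter> D)))"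
  have DG: "D \<subseteq> carrier G" and cD: "card D = k" and v: "v = order G" and k1: "k \<ge> 1"
    using ds unfolding difference_set_def by auto
  have fD: "finite D" using DG fin finite_subset by blast
  have HG: "H \<subseteq> carrier G" using sg subgroup.subset by blast
  have fH: "finite H" using HG fin finite_subset by blast
  have oneH: "\<one> \<in> H" using sg subgroup.one_closed by blast
  have RG: "\<And>C. C \<in> R \<Longrightarrow> C \<subseteq> carrier G" unfolding R_def RCOSETS_def
    using HG r_coset_subset_G by auto
  have fR: "finite R" using RG fin by (meson Pow_iff finite_Pow_iff finite_subset subsetI)
  have C0R: "C0 \<in> R" using C0 R_def by simp
  have memb: "\<And>C d. C \<in> R \<Longrightarrow> d \<in> carrier G \<Longrightarrow> (d \<in> C) = (H #> d = C)"
  proof -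
    fix C d assume C: "C \<in> R" and d: "d \<in> carrier G"
    obtain a where a: "a \<in> carrier G" "C = H #> a" using C unfolding R_def RCOSETS_def by auto
    show "(d \<in> C) = (H #> d = C)"
      using a d repr_independence[of d H a] rcos_self[OF d sg] sg by auto
  qed
  have lag: "r * card H = v" using lagrange[OF sg] v unfolding r_def R_def by simp
  have hpos: "card H \<ge> 1" using fH oneH by (metis One_nat_def Suc_leI card_gt_0_iff empty_iff)
  have rpos: "r \<ge> 1" using fR C0R unfolding r_def by (metis One_nat_def Suc_leI card_gt_0_iff empty_iff)
  have sum1: "(\<Sum>C\<in>R. x C) = real k"
  proof -
    have "(\<Sum>C\<in>R. card {d \<in> D. H #> d = C}) = card D"
      using sum.group[OF fD fR, of "\<lambda>d. H #> d" "\<lambda>_. 1::nat"] DG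
      by (auto simp: image_subset_iff R_def RCOSETS_def)
    moreover have "\<And>C. C \<in> R \<Longrightarrow> {d \<in> D. H #> d = C} = C \<inter> D" using memb DG by auto
    ultimately have "(\<Sum>C\<in>R. card (C \<inter> D)) = k" using cD by simp
    then show ?thesis unfolding x_def by (metis of_nat_sum)
  qed
  have sum2: "(\<Sum>C\<in>R. (x C)^2) = real k + real lam * (real (card H) - 1)"
  proof -
    define P where "P = {p \<in> D \<times> D. fst p \<otimes> inv snd p \<in> H}"
    have fP: "finite P" unfolding P_def using fD by auto
    have cP: "card P = k + lam * card (H - {\<one>})"
      using count_pairs[OF grp ds HG] oneH unfolding P_def by simp
    have "(\<Sum>C\<in>R. card {p \<in> P. H #> fst p = C}) = card P"
      using sum.group[OF fP fR, of "\<lambda>p. H #> fst p" "\<lambda>_. 1::nat"] DG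
      by (auto simp: image_subset_iff R_def RCOSETS_def P_def)
    moreover have "\<And>C. C \<in> R \<Longrightarrow> {p \<in> P. H #> fst p = C} = (C \<inter> D) \<times> (C \<inter> D)"
    proof -
      fix C assume C: "C \<in> R"
      have eqf: "\<And>a b. a \<in> D \<Longrightarrow> b \<in> D \<Longrightarrow> (a \<otimes> inv b \<in> H \<and> H #> a = C) = (a \<in> C \<and> b \<in> C)"
      proof -
        fix a b assume a: "a \<in> D" and b: "b \<in> D"
        have ac: "a \<in> carrier G" and bc: "b \<in> carrier G" using a b DG by auto
        have "(a \<otimes> inv b \<in> H) = (a \<in> H #> b)"
          using subgroup.rcos_module[OF sg grp bc ac] by simp
        also have "\<dots> = (H #> a = H #> b)"
          using memb[of "H #> b" a] ac bc unfolding R_def RCOSETS_def by auto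
        finally show "(a \<otimes> inv b \<in> H \<and> H #> a = C) = (a \<in> C \<and> b \<in> C)"
          using memb[OF C ac] memb[OF C bc] by auto
      qed
      show "{p \<in> P. H #> fst p = C} = (C \<inter> D) \<times> (C \<inter> D)"
      proof (rule Set.set_eqI)
        fix p :: "'a \<times> 'a"
        obtain a b where p: "p = (a, b)" by (cases p)
        show "p \<in> {p \<in> P. H #> fst p = C} \<longleftrightarrow> p \<in> (C \<inter> D) \<times> (C \<inter> D)"
          unfolding p P_def mem_Collect_eq mem_Times_iff fst_conv snd_conv Int_iff using eqf[of a b] by blast
      qed
    qed
    ultimately have "(\<Sum>C\<in>R. card ((C \<inter> D) \<times> (C \<inter> D))) = card P" by simp
    then have "(\<Sum>C\<in>R. (card (C \<inter> D))^2) = k + lam * (card H - 1)"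
      using cP oneH fH by (simp add: card_cartesian_product power2_eq_square)
    then have "real (\<Sum>C\<in>R. (card (C \<inter> D))^2) = real (k + lam * (card H - 1))" by simp
    then show ?thesis using hpos unfolding x_def by (simp add: of_nat_diff)
  qed
  have tot: "real k ^ 2 = real k + real lam * (real v - 1)"
  proof -
    have "card {p \<in> D \<times> D. fst p \<otimes> inv snd p \<in> carrier G} = k + lam * card (carrier G - {\<one>})"
      using count_pairs[OF grp ds subset_refl] by simp
    moreover have "{p \<in> D \<times> D. fst p \<otimes> inv snd p \<in> carrier G} = D \<times> D"
    proof -
      have "\<And>p. p \<in> D \<times> D \<Longrightarrow> fst p \<otimes> inv snd p \<in> carrier G"
        by (intro m_closed inv_closed) (use DG in auto)
      then show ?thesis by blast
    qed
    moreover have "card (carrier G - {\<one>}) = v - 1" using v fin by (simp add: order_def)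
    ultimately have "k * k = k + lam * (v - 1)" using cD by (simp add: card_cartesian_product)
    moreover have "v \<ge> 1" using lag hpos rpos by (metis mult_le_mono mult_1)
    ultimately have "real (k * k) = real (k + lam * (v - 1))" "v \<ge> 1" by simp_all
    then show ?thesis by (simp add: of_nat_diff power2_eq_square)
  qed
  define y where "y = (\<lambda>C. x C - real k / real r)"
  have rr: "real r \<ge> 1" using rpos by simp
  have sy: "(\<Sum>C\<in>R. y C) = 0" unfolding y_def using sum1 rr
    by (simp add: sum_subtractf r_def[symmetric])
  have vr: "real v = real r * real (card H)" using lag by (metis of_nat_mult)
  have sy2: "(\<Sum>C\<in>R. (y C)^2) = (real k - real lam) * (real r - 1) / real r"
  proof -
    have "(\<Sum>C\<in>R. (y C)^2) = (\<Sum>C\<in>R. (x C)^2 - 2 * (real k / real r) * x C + (real k / real r)^2)"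
      unfolding y_def by (intro sum.cong) (simp_all add: power2_diff algebra_simps)
    also have "\<dots> = (\<Sum>C\<in>R. (x C)^2) - (\<Sum>C\<in>R. 2 * (real k / real r) * x C) + (\<Sum>C\<in>R. (real k / real r)^2)"
      by (simp add: sum.distrib sum_subtractf)
    also have "\<dots> = (\<Sum>C\<in>R. (x C)^2) - 2 * (real k / real r) * (\<Sum>C\<in>R. x C) + real r * (real k / real r)^2"
      by (simp add: sum_distrib_left r_def)
    also have "\<dots> = real k + real lam * (real (card H) - 1) - real k ^ 2 / real r"
      using rr unfolding sum1 sum2 by (simp add: power2_eq_square field_simps)
    also have "\<dots> = (real k - real lam) * (real r - 1) / real r"
      using rr unfolding tot vr by (simp add: field_simps)
    finally show ?thesis .
  qed
  have key: "(y C0)^2 \<le> (real k - real lam) * ((real r - 1) / real r)^2"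
  proof (cases "r \<ge> 2")
    case True
    have "(y C0)^2 * real r \<le> (real r - 1) * ((real k - real lam) * (real r - 1) / real r)"
      using var_bound[OF fR C0R _ sy] True sy2 unfolding r_def by simp
    then show ?thesis using rr by (simp add: power2_eq_square field_simps)
  next
    case False
    then have "r = 1" using rpos by simp
    then have "R = {C0}" using C0R fR unfolding r_def by (metis card_1_singletonE singletonD)
    then have "y C0 = 0" using sy by simp
    then show ?thesis using \<open>r = 1\<close> by simp
  qed
  show ?thesis
  proof (cases "r \<ge> 2")
    case True
    have "0 \<le> (\<Sum>C\<in>R. (y C)^2)" by (simp add: sum_nonneg)
    then have n0: "real k - real lam \<ge> 0" using True sy2 rr
      by (simp add: zero_le_divide_iff zero_le_mult_iff)
    have "\<bar>y C0\<bar> = sqrt ((y C0)^2)" by simp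
    also have "\<dots> \<le> sqrt ((real k - real lam) * ((real r - 1) / real r)^2)"
      using key by (rule real_sqrt_le_mono)
    also have "\<dots> = sqrt (real k - real lam) * ((real r - 1) / real r)"
      using rr by (simp add: real_sqrt_mult)
    finally show ?thesis unfolding y_def x_def r_def R_def by simp
  next
    case False
    then have "r = 1" using rpos by simp
    then have "R = {C0}" using C0R fR unfolding r_def by (metis card_1_singletonE singletonD)
    then have "y C0 = 0" using sy by simp
    then show ?thesis using \<open>r = 1\<close> unfolding y_def x_def r_def R_def by simp
  qed
qed


theorem theorem1p1:
  fixes G (structure) and H :: "'a set" and D :: "'a set"
    and v k lam r s :: nat
  assumes "group G"
    and "finite (carrier G)"
    and "subgroup H G"
    and "r = card (rcosets H)"
    and "difference_set G D v k lam"
    and "C \<in> rcosets H \<or> C \<in> lcosets H"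
    and "card (C \<inter> D) = s"
  shows "\<bar>real s - real k / real r\<bar> \<le> sqrt (real k - real lam) * (real r - 1) / real r"
proof (cases "C \<in> rcosets H")
  case True
  then show ?thesis using main_rcos[OF assms(1,2,3,5) True] assms(4,7) by simp
next
  case False
  interpret group G by fact
  have sg: "subgroup H G" by fact
  have HG: "H \<subseteq> carrier G" using sg subgroup.subset by blast
  have fH: "finite H" using HG assms(2) finite_subset by blast
  have oneH: "\<one> \<in> H" using sg subgroup.one_closed by blast
  have hpos: "card H > 0" using fH oneH card_gt_0_iff by blast
  obtain g where g: "g \<in> carrier G" "C = g <# H"
    using False assms(6) unfolding LCOSETS_def by auto
  define K where "K = g <# H #> inv g"
  have sK: "subgroup K G"
    using subgroup_conjugation_is_surj1[of "inv g" H] g sg unfolding K_def by simp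
  have CK: "C = K #> g"
    unfolding K_def g(2)
    using coset_mult_assoc[OF l_coset_subset_G[OF HG g(1)] inv_closed[OF g(1)] g(1)] g(1)
      l_coset_subset_G[OF HG g(1)] by simp
  have CKr: "C \<in> rcosets K" using CK g(1) unfolding RCOSETS_def by auto
  have Kim: "K = (\<lambda>h. g \<otimes> h \<otimes> inv g) ` H"
    unfolding K_def l_coset_def r_coset_def by auto
  have "inj_on (\<lambda>h. g \<otimes> h \<otimes> inv g) H"
  proof (rule inj_onI)
    fix a b assume a: "a \<in> H" and b: "b \<in> H" and e: "g \<otimes> a \<otimes> inv g = g \<otimes> b \<otimes> inv g"
    have ac: "a \<in> carrier G" and bc: "b \<in> carrier G" using a b HG by auto
    have "g \<otimes> a = g \<otimes> b" using e ac bc g(1) by simp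
    then show "a = b" using g(1) ac bc by simp
  qed
  then have cK: "card K = card H" using Kim card_image by blast
  have "card (rcosets K) * card K = card (rcosets H) * card H"
    using lagrange[OF sK] lagrange[OF sg] by simp
  then have "card (rcosets K) = card (rcosets H)" using cK hpos by simp
  then show ?thesis using main_rcos[OF assms(1,2) sK assms(5) CKr] assms(4,7) by simp
qed

end
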